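(* Let $h\ge1$ and $r\ge1$ be natural numbers and let $k_1,\dots,k_r$ be natural numbers with $1\le k_i\le h$. Then there exists a word $A\in\mathsf{W}^N_3$ such that $\mathbf{u}(A)=(K_{h,k_1},\dots,K_{h,k_r})$.
   Context: Words are finite strings over $\mathbb{N}$; $\Lambda$ is the empty word, juxtaposition is concatenation, $A^s$ is $A$ repeated $s$ times. For $k\in\mathbb{N}$, $\mathsf{S}_k$ is the set of words all of whose symbols are $\ge k$; $\mathsf{W}_3$ is the set of words with all symbols $\le3$. Given a linear preorder $\precsim$ with $A\sim B$ iff $A\precsim B\wedge B\precsim A$ and $A\prec B$ iff $A\precsim B\wedge\neg B\precsim A$, a finite sequence $(A_1,\dots,A_p)$ is lexicographically not greater than $(B_1,\dots,B_q)$ iff either $p\le q$ and $A_i\sim B_i$ for all $i\le p$, or there is $s<\min(p,q)$ with $A_i\sim B_i$ for $i\le s$ and $A_{s+1}\prec B_{s+1}$. A lexicographically maximal subsequence of a finite sequence is a subsequence that is lexicographically not less than every subsequence. The linear preorder $\precsim$ on words is defined by recursion on (largest symbol of $AB$) $-$ (smallest symbol of $AB$): $\Lambda\precsim\Lambda$; if $AB$ is nonempty with minimal symbol $n$, write uniquely $A=A_1n\cdots nA_k$, $B=B_1n\cdots nB_l$ ($k,l\ge1$) with $A_i,B_j\in\mathsf{S}_{n+1}$ (possibly empty); let $C,D$ be lexicographically maximal subsequences of $(A_1,\dots,A_k)$, $(B_1,\dots,B_l)$; then $A\precsim B$ iff $C$ is lexicographically not greater than $D$. The set $\mathsf{NF}$: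 $\Lambda\in\mathsf{NF}$; a word with minimal symbol $n$, written $A_1n\cdots nA_k$ with $k\ge2$, $A_i\in\mathsf{S}_{n+1}$, is in $\mathsf{NF}$ iff $A_k\precsim\dots\precsim A_1$ and all $A_i\in\mathsf{NF}$. Every word is equivalent to exactly one word of $\mathsf{NF}$. For $A\in\mathsf{NF}$, $\Diamond_nA$ is the unique word of $\mathsf{NF}$ equivalent to $An$. $\mathsf{W}^N_3=\mathsf{W}_3\cap\mathsf{NF}$. Let $I_s=3^s2$; for $1\le k\le h$ let $K_{h,k}=I_{h-1}I_{h-2}\cdots I_{k+1}I_k3^k$. For $A\in\mathsf{W}^N_3$ written as $A=A_r0A_{r-1}0\cdots0A_1$ with all $A_i\in\mathsf{S}_1\cap\mathsf{W}^N_3$, put $\mathbf{u}(A)=(u_1(A),\dots,u_r(A))$ where $u_i(A)=\Diamond_3(A_r0A_{r-1}0\cdots0A_i)$. *)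

theory Defs
  imports Main
begin

(* Words are nat lists; [] is the empty word Lambda. *)

primrec splitn :: "nat \<Rightarrow> nat list \<Rightarrow> nat list list" where
  "splitn n [] = [[]]"
| "splitn n (x # xs) =
     (if x = n then [] # splitn n xs
      else (x # hd (splitn n xs)) # tl (splitn n xs))"

fun joinw :: "nat \<Rightarrow> nat list list \<Rightarrow> nat list" where
  "joinw n [] = []"
| "joinw n [p] = p"
| "joinw n (p # q # ps) = p @ n # joinw n (q # ps)"

definition pequiv :: "('a \<Rightarrow> 'a \<Rightarrow> bool) \<Rightarrow> 'a \<Rightarrow> 'a \<Rightarrow> bool" where
  "pequiv R a b \<longleftrightarrow> R a b \<and> R b a"

definition pless :: "('a \<Rightarrow> 'a \<Rightarrow> bool) \<Rightarrow> 'a \<Rightarrow> 'a \<Rightarrow> bool" where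
  "pless R a b \<longleftrightarrow> R a b \<and> \<not> R b a"

definition lexle :: "('a \<Rightarrow> 'a \<Rightarrow> bool) \<Rightarrow> 'a list \<Rightarrow> 'a list \<Rightarrow> bool" where
  "lexle R xs ys \<longleftrightarrow>
     (length xs \<le> length ys \<and> (\<forall>i < length xs. pequiv R (xs ! i) (ys ! i)))
   \<or> (\<exists>s < min (length xs) (length ys).
        (\<forall>i < s. pequiv R (xs ! i) (ys ! i)) \<and> pless R (xs ! s) (ys ! s))"

(* a lexicographically maximal subsequence (chosen by Hilbert choice; all choices are
   pairwise equivalent, so the relation below does not depend on the choice) *)
definition lexmax :: "('a \<Rightarrow> 'a \<Rightarrow> bool) \<Rightarrow> 'a list \<Rightarrow> 'a list" where
  "lexmax R xs = (SOME C. C \<in> set (subseqs xs) \<and> (\<forall>D \<in> set (subseqs xs). lexle R D C))"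

(* The preorder, by recursion on a fuel bounding (max symbol - min symbol) of AB *)
primrec prec_aux :: "nat \<Rightarrow> nat list \<Rightarrow> nat list \<Rightarrow> bool" where
  "prec_aux 0 = (\<lambda>A B. True)"
| "prec_aux (Suc d) = (\<lambda>A B.
     if A @ B = [] then True
     else (let n = Min (set (A @ B))
           in lexle (prec_aux d) (lexmax (prec_aux d) (splitn n A))
                                 (lexmax (prec_aux d) (splitn n B))))"

definition prec :: "nat list \<Rightarrow> nat list \<Rightarrow> bool" where
  "prec A B = prec_aux (Suc (Max (set (A @ B)) - Min (set (A @ B)))) A B"

definition wequiv :: "nat list \<Rightarrow> nat list \<Rightarrow> bool" where
  "wequiv A B \<longleftrightarrow> prec A B \<and> prec B A"

inductive_set NF :: "nat list set" where
  NF_empty: "[] \<in> NF"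
| NF_step: "A \<noteq> [] \<Longrightarrow>
     (\<forall>i. Suc i < length (splitn (Min (set A)) A) \<longrightarrow>
          prec (splitn (Min (set A)) A ! Suc i) (splitn (Min (set A)) A ! i)) \<Longrightarrow>
     (\<forall>p \<in> set (splitn (Min (set A)) A). p \<in> NF) \<Longrightarrow> A \<in> NF"

definition diamond :: "nat \<Rightarrow> nat list \<Rightarrow> nat list" where
  "diamond n A = (THE B. B \<in> NF \<and> wequiv B (A @ [n]))"

definition W3 :: "nat list set" where
  "W3 = {A. \<forall>x \<in> set A. x \<le> 3}"

definition W3N :: "nat list set" where
  "W3N = W3 \<inter> NF"

definition Iw :: "nat \<Rightarrow> nat list" where
  "Iw s = replicate s 3 @ [2]"

definition Kw :: "nat \<Rightarrow> nat \<Rightarrow> nat list" where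
  "Kw h k = concat (map Iw (rev [k..<h])) @ replicate k 3"

(* u(A) = (u_1(A),...,u_r(A)) where A = A_r 0 ... 0 A_1 and
   u_i(A) = diamond 3 (A_r 0 ... 0 A_i) *)
definition uvec :: "nat list \<Rightarrow> nat list list" where
  "uvec A = (let ps = splitn 0 A; r = length ps
             in map (\<lambda>i. diamond 3 (joinw 0 (take (r - i + 1) ps))) [1..<r+1])"

end

theory Submission
  imports Defs
begin

lemma splitn_ne: "splitn n xs \<noteq> []"
  by (induct xs) auto

lemma joinw_Cons_Cons: "joinw n ((x # p) # ps) = x # joinw n (p # ps)"
  by (cases ps) auto

lemma joinw_Cons: "ps \<noteq> [] \<Longrightarrow> joinw n (p # ps) = p @ n # joinw n ps"
  by (cases ps) auto

lemma joinw_splitn: "joinw n (splitn n xs) = xs"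
proof (induct xs)
  case Nil then show ?case by simp
next
  case (Cons x xs)
  let ?s = "splitn n xs"
  have s: "?s = hd ?s # tl ?s" using splitn_ne by (metis list.collapse)
  show ?case
  proof (cases "x = n")
    case True then show ?thesis using Cons splitn_ne joinw_Cons[of "splitn n xs" n "[]"] by simp
  next
    case False
    have "joinw n (splitn n (x # xs)) = x # joinw n (hd ?s # tl ?s)"
      using False by (simp add: joinw_Cons_Cons)
    also have "\<dots> = x # xs" using s Cons by simp
    finally show ?thesis .
  qed
qed

lemma splitn_no: "n \<notin> set xs \<Longrightarrow> splitn n xs = [xs]"
  by (induct xs) auto

lemma splitn_append_sep: "n \<notin> set p \<Longrightarrow> splitn n (p @ n # ys) = p # splitn n ys"
  by (induct p) auto

lemma splitn_joinw: "ps \<noteq> [] \<Longrightarrow> \<forall>p\<in>set ps. n \<notin> set p \<Longrightarrow> splitn n (joinw n ps) = ps"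
proof (induct ps)
  case Nil then show ?case by simp
next
  case (Cons p ps)
  show ?case
  proof (cases ps)
    case Nil then show ?thesis using Cons splitn_no by simp
  next
    case (Cons q qs)
    then show ?thesis using Cons.prems Cons.hyps
      by (simp add: splitn_append_sep)
  qed
qed

lemma splitn_pieces: "p \<in> set (splitn n xs) \<Longrightarrow> n \<notin> set p \<and> set p \<subseteq> set xs"
proof (induct xs arbitrary: p)
  case Nil then show ?case by simp
next
  case (Cons x xs)
  let ?s = "splitn n xs"
  have h: "hd ?s \<in> set ?s" using splitn_ne by simp
  have t: "set (tl ?s) \<subseteq> set ?s" by (metis list.set_sel(2) subsetI tl_Nil empty_iff list.set(1))
  show ?case
  proof (cases "x = n")
    case True then show ?thesis using Cons by auto
  next
    case False
    then have "p = x # hd ?s \<or> p \<in> set (tl ?s)" using Cons.prems by simp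
    then show ?thesis
    proof
      assume "p = x # hd ?s" then show ?thesis using Cons.hyps[OF h] False by auto
    next
      assume "p \<in> set (tl ?s)" then show ?thesis using Cons.hyps t False by auto
    qed
  qed
qed

lemma splitn_pieces_length: "p \<in> set (splitn n xs) \<Longrightarrow> length p \<le> length xs \<and> (n \<in> set xs \<longrightarrow> length p < length xs)"
proof (induct xs arbitrary: p)
  case Nil then show ?case by simp
next
  case (Cons x xs)
  let ?s = "splitn n xs"
  have h: "hd ?s \<in> set ?s" using splitn_ne by simp
  have t: "set (tl ?s) \<subseteq> set ?s" by (metis list.set_sel(2) subsetI tl_Nil empty_iff list.set(1))
  show ?case
  proof (cases "x = n")
    case True then show ?thesis using Cons by fastforce
  next
    case False
    then have "p = x # hd ?s \<or> p \<in> set (tl ?s)" using Cons.prems by simp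
    then show ?thesis using Cons.hyps[OF h] Cons.hyps t False by fastforce
  qed
qed

lemma splitn_length: "n \<in> set xs \<Longrightarrow> 2 \<le> length (splitn n xs)"
proof (induct xs)
  case Nil then show ?case by simp
next
  case (Cons x xs)
  have l: "length (splitn n xs) \<ge> 1" using splitn_ne by (metis One_nat_def Suc_leI length_greater_0_conv)
  show ?case
  proof (cases "x = n")
    case True then show ?thesis using l by simp
  next
    case False
    have "length ((x # hd (splitn n xs)) # tl (splitn n xs)) = length (splitn n xs)"
      using splitn_ne[of n xs] by (cases "splitn n xs") auto
    then have "length (splitn n (x#xs)) = length (splitn n xs)"
      using False by simp
    then show ?thesis using Cons False by simp
  qed
qed

lemma set_joinw: "set (joinw n ps) \<subseteq> \<Union>(set ` set ps) \<union> {n}"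
  by (induct n ps rule: joinw.induct) auto

lemma joinw_snoc: "joinw n (map f xs @ [y]) = concat (map (\<lambda>x. f x @ [n]) xs) @ y"
  by (induct xs) (auto simp: joinw_Cons)

lemma joinw_snoc_app: "joinw n (xs @ [y]) @ z = joinw n (xs @ [y @ z])"
  by (induct n xs rule: joinw.induct) (auto simp: joinw_Cons)

lemma lexle_Nil[simp]: "lexle R [] ys"
  by (simp add: lexle_def)

lemma lexle_Cons_Nil[simp]: "\<not> lexle R (x#xs) []"
  by (simp add: lexle_def)

lemma lexle_Cons_Cons[simp]:
  "lexle R (x#xs) (y#ys) \<longleftrightarrow> pless R x y \<or> (pequiv R x y \<and> lexle R xs ys)"
proof -
  have A: "(length (x#xs) \<le> length (y#ys) \<and> (\<forall>i<length (x#xs). pequiv R ((x#xs)!i) ((y#ys)!i)))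
     \<longleftrightarrow> pequiv R x y \<and> (length xs \<le> length ys \<and> (\<forall>i<length xs. pequiv R (xs!i) (ys!i)))"
    by (auto simp: less_Suc_eq_0_disj)
  have B: "(\<exists>s<min (length (x#xs)) (length (y#ys)). (\<forall>i<s. pequiv R ((x#xs)!i) ((y#ys)!i)) \<and> pless R ((x#xs)!s) ((y#ys)!s))
     \<longleftrightarrow> pless R x y \<or> (pequiv R x y \<and> (\<exists>s<min (length xs) (length ys). (\<forall>i<s. pequiv R (xs!i) (ys!i)) \<and> pless R (xs!s) (ys!s)))"
  proof
    assume "\<exists>s<min (length (x#xs)) (length (y#ys)). (\<forall>i<s. pequiv R ((x#xs)!i) ((y#ys)!i)) \<and> pless R ((x#xs)!s) ((y#ys)!s)"
    then obtain s where s: "s<min (length (x#xs)) (length (y#ys))" "\<forall>i<s. pequiv R ((x#xs)!i) ((y#ys)!i)" "pless R ((x#xs)!s) ((y#ys)!s)" by blast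
    show "pless R x y \<or> (pequiv R x y \<and> (\<exists>s<min (length xs) (length ys). (\<forall>i<s. pequiv R (xs!i) (ys!i)) \<and> pless R (xs!s) (ys!s)))"
    proof (cases s)
      case 0 then show ?thesis using s by simp
    next
      case (Suc t)
      have "pequiv R x y" using s(2) Suc by (metis nth_Cons_0 zero_less_Suc)
      moreover have "\<forall>i<t. pequiv R (xs!i) (ys!i)" using s(2) Suc by auto
      moreover have "t < min (length xs) (length ys)" "pless R (xs!t) (ys!t)" using s(1,3) Suc by auto
      ultimately show ?thesis by blast
    qed
  next
    assume "pless R x y \<or> (pequiv R x y \<and> (\<exists>s<min (length xs) (length ys). (\<forall>i<s. pequiv R (xs!i) (ys!i)) \<and> pless R (xs!s) (ys!s)))"
    then show "\<exists>s<min (length (x#xs)) (length (y#ys)). (\<forall>i<s. pequiv R ((x#xs)!i) ((y#ys)!i)) \<and> pless R ((x#xs)!s) ((y#ys)!s)"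
    proof
      assume "pless R x y" then show ?thesis by (intro exI[of _ 0]) simp
    next
      assume "pequiv R x y \<and> (\<exists>s<min (length xs) (length ys). (\<forall>i<s. pequiv R (xs!i) (ys!i)) \<and> pless R (xs!s) (ys!s))"
      then obtain t where t: "pequiv R x y" "t<min (length xs) (length ys)" "\<forall>i<t. pequiv R (xs!i) (ys!i)" "pless R (xs!t) (ys!t)" by blast
      show ?thesis
        apply (intro exI[of _ "Suc t"])
        using t by (auto simp: less_Suc_eq_0_disj)
    qed
  qed
  show ?thesis unfolding lexle_def using A B by blast
qed

lemma lexle_single: "lexle R [a] [b] \<longleftrightarrow> R a b"
  by (auto simp: pless_def pequiv_def)

lemma lexle_trans:
  assumes "\<forall>a\<in>S. \<forall>b\<in>S. \<forall>c\<in>S. R a b \<longrightarrow> R b c \<longrightarrow> R a c"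
  shows "set xs \<subseteq> S \<Longrightarrow> set ys \<subseteq> S \<Longrightarrow> set zs \<subseteq> S \<Longrightarrow> lexle R xs ys \<Longrightarrow> lexle R ys zs \<Longrightarrow> lexle R xs zs"
proof (induct xs arbitrary: ys zs)
  case Nil then show ?case by simp
next
  case (Cons x xs)
  then obtain y ys' where y: "ys = y # ys'" by (cases ys) auto
  with Cons obtain z zs' where z: "zs = z # zs'" by (cases zs) auto
  have xyz: "x \<in> S" "y \<in> S" "z \<in> S" using Cons.prems y z by auto
  have T: "\<And>a b c. a \<in> {x,y,z} \<Longrightarrow> b \<in> {x,y,z} \<Longrightarrow> c \<in> {x,y,z} \<Longrightarrow> R a b \<Longrightarrow> R b c \<Longrightarrow> R a c"
    using assms xyz by blast
  have IH: "lexle R xs ys' \<Longrightarrow> lexle R ys' zs' \<Longrightarrow> lexle R xs zs'"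
    using Cons y z by auto
  show ?case using Cons.prems(4,5) unfolding y z
    apply (simp add: pless_def pequiv_def)
    using T[of x y z] T[of z x y] T[of y z x] IH by blast
qed

lemma lexle_total:
  assumes "\<forall>a\<in>S. \<forall>b\<in>S. R a b \<or> R b a"
  shows "set xs \<subseteq> S \<Longrightarrow> set ys \<subseteq> S \<Longrightarrow> lexle R xs ys \<or> lexle R ys xs"
proof (induct xs arbitrary: ys)
  case Nil then show ?case by simp
next
  case (Cons x xs)
  show ?case
  proof (cases ys)
    case Nil then show ?thesis by simp
  next
    case (Cons y ys')
    have "R x y \<or> R y x" using assms Cons.prems \<open>ys = y # ys'\<close> by auto
    then show ?thesis using Cons.hyps[of ys'] Cons.prems \<open>ys = y # ys'\<close>
      by (auto simp: pless_def pequiv_def)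
  qed
qed

lemma lexle_refl: "\<forall>a\<in>set xs. R a a \<Longrightarrow> lexle R xs xs"
  by (induct xs) (auto simp: pequiv_def)

lemma lexle_antisym: "lexle R xs ys \<Longrightarrow> lexle R ys xs \<Longrightarrow> list_all2 (pequiv R) xs ys"
proof (induct xs arbitrary: ys)
  case Nil then show ?case by (cases ys) auto
next
  case (Cons x xs)
  then show ?case by (cases ys) (auto simp: pless_def pequiv_def)
qed

lemma list_all2_lexle: "list_all2 (pequiv R) xs ys \<Longrightarrow> lexle R xs ys"
  by (induct rule: list_all2_induct) auto

lemma lexle_append: "\<forall>a\<in>set xs. R a a \<Longrightarrow> lexle R xs (xs @ ys)"
  by (induct xs) (auto simp: pequiv_def)

lemma lexle_cong_R:
  "\<forall>a\<in>set xs. \<forall>b\<in>set ys. R a b = R' a b \<and> R b a = R' b a \<Longrightarrow> lexle R xs ys = lexle R' xs ys"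
proof (induct xs arbitrary: ys)
  case Nil then show ?case by simp
next
  case (Cons x xs)
  then show ?case by (cases ys) (auto simp: pless_def pequiv_def)
qed

lemma lexle_map: "lexle R (map f xs) (map f ys) = lexle (\<lambda>a b. R (f a) (f b)) xs ys"
proof (induct xs arbitrary: ys)
  case Nil then show ?case by simp
next
  case (Cons x xs)
  then show ?case by (cases ys) (auto simp: pless_def pequiv_def)
qed


lemma subseqs_Cons_iff: "D \<in> set (subseqs (x#xs)) \<longleftrightarrow> (\<exists>D'. D = x # D' \<and> D' \<in> set (subseqs xs)) \<or> D \<in> set (subseqs xs)"
  by (auto simp: Let_def)

lemma subseqs_Cons_mem1: "D \<in> set (subseqs xs) \<Longrightarrow> D \<in> set (subseqs (x#xs))"
  by (simp add: Let_def)

lemma subseqs_Cons_mem2: "D \<in> set (subseqs xs) \<Longrightarrow> x#D \<in> set (subseqs (x#xs))"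
  by (simp add: Let_def)

lemma subseqs_Cons_cases: "D \<in> set (subseqs (x#xs)) \<Longrightarrow> (\<And>D'. D = x#D' \<Longrightarrow> D' \<in> set (subseqs xs) \<Longrightarrow> P) \<Longrightarrow> (D \<in> set (subseqs xs) \<Longrightarrow> P) \<Longrightarrow> P"
  by (auto simp: Let_def)

lemma subseqs_set: "D \<in> set (subseqs xs) \<Longrightarrow> set D \<subseteq> set xs"
  by (metis Pow_iff image_eqI subseqs_powset)

lemma lexmax_cong:
  assumes "\<forall>a\<in>set xs. \<forall>b\<in>set xs. R a b = R' a b"
  shows "lexmax R xs = lexmax R' xs"
proof -
  have "\<And>C. (C \<in> set (subseqs xs) \<and> (\<forall>D\<in>set (subseqs xs). lexle R D C))
     = (C \<in> set (subseqs xs) \<and> (\<forall>D\<in>set (subseqs xs). lexle R' D C))"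
  proof -
    fix C
    { assume C: "C \<in> set (subseqs xs)"
      have "\<forall>D\<in>set (subseqs xs). lexle R D C = lexle R' D C"
      proof
        fix D assume "D \<in> set (subseqs xs)"
        then show "lexle R D C = lexle R' D C"
          using C subseqs_set assms by (intro lexle_cong_R) blast
      qed }
    then show "?thesis C" by blast
  qed
  then show ?thesis unfolding lexmax_def by simp
qed

lemma lexmax_exists:
  assumes tot: "\<forall>a\<in>set xs. \<forall>b\<in>set xs. R a b \<or> R b a"
    and tr: "\<forall>a\<in>set xs. \<forall>b\<in>set xs. \<forall>c\<in>set xs. R a b \<longrightarrow> R b c \<longrightarrow> R a c"
  shows "\<exists>C\<in>set (subseqs xs). \<forall>D\<in>set (subseqs xs). lexle R D C"
  using assms
proof (induct xs)
  case Nil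
  have "[] \<in> set (subseqs ([]::'a list))" by simp
  moreover have "\<forall>D\<in>set (subseqs ([]::'a list)). lexle R D []" by simp
  ultimately show ?case by blast
next
  case (Cons x xs)
  let ?S = "set (x#xs)"
  have totxs: "\<forall>a\<in>set xs. \<forall>b\<in>set xs. R a b \<or> R b a" using Cons.prems(1) by (meson list.set_intros(2))
  have trxs: "\<forall>a\<in>set xs. \<forall>b\<in>set xs. \<forall>c\<in>set xs. R a b \<longrightarrow> R b c \<longrightarrow> R a c"
    using Cons.prems(2) by (meson list.set_intros(2))
  obtain C' where C': "C' \<in> set (subseqs xs)" "\<forall>D\<in>set (subseqs xs). lexle R D C'"
    using Cons.hyps[OF totxs trxs] by blast
  have C'S: "set C' \<subseteq> ?S" using subseqs_set[OF C'(1)] by auto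
  have xC'S: "set (x#C') \<subseteq> ?S" using C'S by simp
  have rx: "R x x" using Cons.prems(1) by simp
  have tl: "lexle R (x#C') C' \<or> lexle R C' (x#C')"
    by (rule lexle_total[OF Cons.prems(1) xC'S C'S])
  have trS: "\<And>xs ys zs. set xs \<subseteq> ?S \<Longrightarrow> set ys \<subseteq> ?S \<Longrightarrow> set zs \<subseteq> ?S \<Longrightarrow> lexle R xs ys \<Longrightarrow> lexle R ys zs \<Longrightarrow> lexle R xs zs"
    by (rule lexle_trans[OF Cons.prems(2)])
  show ?case
  proof (cases "lexle R (x#C') C'")
    case True
    show ?thesis
    proof (rule bexI[of _ C'])
      show "C' \<in> set (subseqs (x#xs))" using C'(1) by (rule subseqs_Cons_mem1)
      show "\<forall>D\<in>set (subseqs (x # xs)). lexle R D C'"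
      proof
        fix D assume "D \<in> set (subseqs (x # xs))"
        then consider D' where "D = x # D'" "D' \<in> set (subseqs xs)" | "D \<in> set (subseqs xs)"
          by (rule subseqs_Cons_cases)
        then show "lexle R D C'"
        proof cases
          case 1
          have "lexle R D' C'" using C'(2) 1(2) by blast
          then have "lexle R (x#D') (x#C')" using rx by (simp add: pequiv_def)
          moreover have "set D' \<subseteq> ?S" using subseqs_set[OF 1(2)] by auto
          ultimately show ?thesis using trS[of "x#D'" "x#C'" C'] True C'S xC'S 1 by simp
        next
          case 2 then show ?thesis using C' by blast
        qed
      qed
    qed
  next
    case False
    then have le: "lexle R C' (x#C')" using tl by blast
    show ?thesis
    proof (rule bexI[of _ "x#C'"])
      show "x#C' \<in> set (subseqs (x#xs))" using C'(1) by (rule subseqs_Cons_mem2)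
      show "\<forall>D\<in>set (subseqs (x # xs)). lexle R D (x#C')"
      proof
        fix D assume "D \<in> set (subseqs (x # xs))"
        then consider D' where "D = x # D'" "D' \<in> set (subseqs xs)" | "D \<in> set (subseqs xs)"
          by (rule subseqs_Cons_cases)
        then show "lexle R D (x#C')"
        proof cases
          case 1
          have "lexle R D' C'" using C'(2) 1(2) by blast
          then show ?thesis using rx 1(1) by (simp add: pequiv_def)
        next
          case 2
          have "set D \<subseteq> ?S" using subseqs_set[OF 2] by auto
          then show ?thesis using trS[of D C' "x#C'"] C'(2) 2 le C'S xC'S by blast
        qed
      qed
    qed
  qed
qed

lemma lexmax_prop:
  assumes "\<forall>a\<in>set xs. \<forall>b\<in>set xs. R a b \<or> R b a"
    and "\<forall>a\<in>set xs. \<forall>b\<in>set xs. \<forall>c\<in>set xs. R a b \<longrightarrow> R b c \<longrightarrow> R a c"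
  shows "lexmax R xs \<in> set (subseqs xs) \<and> (\<forall>D\<in>set (subseqs xs). lexle R D (lexmax R xs))"
proof -
  have "\<exists>C. C \<in> set (subseqs xs) \<and> (\<forall>D\<in>set (subseqs xs). lexle R D C)"
    using lexmax_exists[OF assms] by blast
  from someI_ex[OF this] show ?thesis unfolding lexmax_def .
qed

lemma lexmax_single: "R x x \<Longrightarrow> lexmax R [x] = [x]"
  unfolding lexmax_def
proof (rule some_equality)
  assume "R x x"
  then show "[x] \<in> set (subseqs [x]) \<and> (\<forall>D\<in>set (subseqs [x]). lexle R D [x])"
    by (auto simp: pequiv_def)
next
  fix C assume a: "C \<in> set (subseqs [x]) \<and> (\<forall>D\<in>set (subseqs [x]). lexle R D C)"
  have s: "set (subseqs [x]) = {[x], []}" by simp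
  have "lexle R [x] C" using a s by blast
  then have "C \<noteq> []" by auto
  then show "C = [x]" using a s by blast
qed

definition spread :: "nat list \<Rightarrow> nat" where
  "spread xs = (if xs = [] then 0 else Suc (Max (set xs) - Min (set xs)))"

lemma spread_set: "set xs = set ys \<Longrightarrow> spread xs = spread ys"
  by (auto simp: spread_def)

lemma spread_mono: "set xs \<subseteq> set ys \<Longrightarrow> spread xs \<le> spread ys"
proof -
  assume s: "set xs \<subseteq> set ys"
  show ?thesis
  proof (cases "xs = []")
    case True then show ?thesis by (simp add: spread_def)
  next
    case False
    then have ne: "set xs \<noteq> {}" "set ys \<noteq> {}" "ys \<noteq> []" using s by auto
    have "Max (set xs) \<le> Max (set ys)" using Max_mono[OF s ne(1)] by simp
    moreover have "Min (set ys) \<le> Min (set xs)" using Min_antimono[OF s ne(1)] by simp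
    moreover have "Min (set xs) \<le> Max (set xs)" using ne by simp
    ultimately have "Max (set xs) - Min (set xs) \<le> Max (set ys) - Min (set ys)" by arith
    then show ?thesis using False ne unfolding spread_def by simp
  qed
qed

lemma spread_lt:
  assumes "xs \<noteq> []" "\<forall>y\<in>set ys. y \<in> set xs \<and> Min (set xs) < y"
  shows "spread ys < spread xs"
proof (cases "ys = []")
  case True then show ?thesis using assms by (simp add: spread_def)
next
  case False
  have s: "set ys \<subseteq> set xs" using assms by auto
  have "Max (set ys) \<le> Max (set xs)" using Max_mono[OF s] False by simp
  moreover have "Min (set ys) \<in> set ys" using False by simp
  then have "Min (set ys) > Min (set xs)" using assms by blast
  moreover have "Min (set ys) \<le> Max (set ys)" using False by simp
  ultimately have "Max (set ys) - Min (set ys) < Max (set xs) - Min (set xs)" by arith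
  then show ?thesis using False assms unfolding spread_def by simp
qed

lemma prec_spread: "A @ B \<noteq> [] \<Longrightarrow> prec A B = prec_aux (spread (A@B)) A B"
proof -
  assume ne: "A @ B \<noteq> []"
  have "spread (A@B) = Suc (Max (set (A@B)) - Min (set (A@B)))" using ne by (simp add: spread_def)
  then show ?thesis unfolding prec_def by (simp only: )
qed

lemma prec_aux_Nil0: "prec_aux (Suc d) [] []"
  by simp

lemma prec_Nil: "prec [] []"
  unfolding prec_def by (rule prec_aux_Nil0)

lemma prec_aux_Nil: "prec_aux d [] []"
  by (cases d) auto

lemma prec_aux_refl: "prec_aux d A A"
proof (induct d arbitrary: A)
  case 0 then show ?case by simp
next
  case (Suc d)
  have "\<forall>xs. lexle (prec_aux d) xs xs" using lexle_refl[of _ "prec_aux d"] Suc by blast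
  then show ?case by (simp add: Let_def)
qed

lemma prec_refl: "prec A A"
  unfolding prec_def by (rule prec_aux_refl)

lemma pieces_gt: "p \<in> set (splitn m X) \<Longrightarrow> \<forall>y\<in>set X. m \<le> y \<Longrightarrow> \<forall>y\<in>set p. y \<in> set X \<and> m < y"
  using splitn_pieces[of p m X] by (metis le_neq_implies_less subsetD)

definition GoodF :: "nat \<Rightarrow> bool" where
  "GoodF M \<longleftrightarrow> (\<forall>A B d. spread (A@B) < M \<longrightarrow> spread (A@B) \<le> d \<longrightarrow> prec_aux d A B = prec A B)"

definition GoodT :: "nat \<Rightarrow> bool" where
  "GoodT M \<longleftrightarrow> (\<forall>A B C. spread (A@B@C) < M \<longrightarrow> (prec A B \<or> prec B A) \<and> (prec A B \<longrightarrow> prec B C \<longrightarrow> prec A C))"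

lemma triple_spread:
  assumes "Z \<noteq> []" "\<forall>p\<in>S. \<forall>y\<in>set p. y \<in> set Z \<and> Min (set Z) < y" "x \<in> S" "y \<in> S" "z \<in> S"
  shows "spread (x@y@z) < spread Z" "spread (x@y) < spread Z"
proof -
  show "spread (x@y@z) < spread Z" using assms by (intro spread_lt) auto
  show "spread (x@y) < spread Z" using assms by (intro spread_lt) auto
qed

lemma unfold_gen:
  assumes GF: "GoodF M" and GT: "GoodT M" and ne: "A@B \<noteq> []" and sp: "spread (A@B) \<le> M"
    and d: "spread (A@B) \<le> d"
  shows "prec_aux d A B = lexle prec (lexmax prec (splitn (Min (set (A@B))) A)) (lexmax prec (splitn (Min (set (A@B))) B))"
proof -
  define n where "n = Min (set (A@B))"
  have sp1: "spread (A@B) \<ge> 1" using ne by (simp add: spread_def)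
  then obtain d0 where d0: "d = Suc d0" using d by (cases d) auto
  define S where "S = set (splitn n A) \<union> set (splitn n B)"
  have Sel: "\<forall>p\<in>S. \<forall>y\<in>set p. y \<in> set (A@B) \<and> Min (set (A@B)) < y"
  proof (intro ballI)
    fix p y assume p: "p \<in> S" and y: "y \<in> set p"
    have "\<forall>y\<in>set A. n \<le> y" "\<forall>y\<in>set B. n \<le> y" unfolding n_def by auto
    then show "y \<in> set (A@B) \<and> Min (set (A@B)) < y"
      using pieces_gt[of p n A] pieces_gt[of p n B] p y unfolding S_def n_def by auto
  qed
  have agree: "\<forall>x\<in>S. \<forall>y\<in>S. prec_aux d0 x y = prec x y"
  proof (intro ballI)
    fix x y assume "x \<in> S" "y \<in> S"
    then have "spread (x@y) < spread (A@B)" using triple_spread(2)[OF ne Sel] by blast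
    then have "spread (x@y) < M" "spread (x@y) \<le> d0" using sp d d0 by linarith+
    then show "prec_aux d0 x y = prec x y" using GF unfolding GoodF_def by blast
  qed
  have tt: "\<forall>x\<in>S. \<forall>y\<in>S. \<forall>z\<in>S. (prec x y \<or> prec y x) \<and> (prec x y \<longrightarrow> prec y z \<longrightarrow> prec x z)"
  proof (intro ballI)
    fix x y z assume "x \<in> S" "y \<in> S" "z \<in> S"
    then have "spread (x@y@z) < spread (A@B)" using triple_spread(1)[OF ne Sel] by blast
    then have "spread (x@y@z) < M" using sp by linarith
    then show "(prec x y \<or> prec y x) \<and> (prec x y \<longrightarrow> prec y z \<longrightarrow> prec x z)"
      using GT unfolding GoodT_def by blast
  qed
  have LA: "lexmax (prec_aux d0) (splitn n A) = lexmax prec (splitn n A)"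
    by (rule lexmax_cong) (use agree S_def in auto)
  have LB: "lexmax (prec_aux d0) (splitn n B) = lexmax prec (splitn n B)"
    by (rule lexmax_cong) (use agree S_def in auto)
  have mA: "set (lexmax prec (splitn n A)) \<subseteq> S"
  proof -
    have "lexmax prec (splitn n A) \<in> set (subseqs (splitn n A))"
      using lexmax_prop[of "splitn n A" prec] tt unfolding S_def by blast
    then show ?thesis using subseqs_set S_def by blast
  qed
  have mB: "set (lexmax prec (splitn n B)) \<subseteq> S"
  proof -
    have "lexmax prec (splitn n B) \<in> set (subseqs (splitn n B))"
      using lexmax_prop[of "splitn n B" prec] tt unfolding S_def by blast
    then show ?thesis using subseqs_set S_def by blast
  qed
  have "prec_aux (Suc d0) A B = lexle (prec_aux d0) (lexmax (prec_aux d0) (splitn n A)) (lexmax (prec_aux d0) (splitn n B))"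
    unfolding n_def by (simp only: prec_aux.simps Let_def ne if_False)
  then have "prec_aux d A B = lexle (prec_aux d0) (lexmax prec (splitn n A)) (lexmax prec (splitn n B))"
    using d0 LA LB by simp
  also have "\<dots> = lexle prec (lexmax prec (splitn n A)) (lexmax prec (splitn n B))"
    by (rule lexle_cong_R) (use mA mB agree in blast)
  finally show ?thesis unfolding n_def .
qed

lemma level_gen:
  assumes GF: "GoodF M" and GT: "GoodT M" and sp: "spread (X@Y) \<le> M"
    and ge: "\<forall>y\<in>set (X@Y). m \<le> y"
  shows "prec X Y = lexle prec (lexmax prec (splitn m X)) (lexmax prec (splitn m Y))"
proof (cases "m \<in> set (X@Y)")
  case True
  then have ne: "X@Y \<noteq> []" by auto
  have "Min (set (X@Y)) = m" using True ge by (intro Min_eqI) auto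
  then show ?thesis using unfold_gen[OF GF GT ne sp order.refl] prec_spread[OF ne] by simp
next
  case False
  then show ?thesis using splitn_no[of m X] splitn_no[of m Y]
    by (auto simp add: lexmax_single prec_refl pless_def pequiv_def)
qed

lemma good: "GoodF M \<and> GoodT M"
proof (induct M)
  case 0 then show ?case by (simp add: GoodF_def GoodT_def)
next
  case (Suc M)
  then have GF: "GoodF M" and GT: "GoodT M" by auto
  have F: "GoodF (Suc M)"
    unfolding GoodF_def
  proof (intro allI impI)
    fix A B d assume a: "spread (A@B) < Suc M" "spread (A@B) \<le> d"
    show "prec_aux d A B = prec A B"
    proof (cases "A@B = []")
      case True then show ?thesis by (simp add: prec_aux_Nil prec_Nil)
    next
      case False
      have sp: "spread (A@B) \<le> M" using a by simp
      have e1: "prec_aux d A B = lexle prec (lexmax prec (splitn (Min (set (A@B))) A)) (lexmax prec (splitn (Min (set (A@B))) B))"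
        by (rule unfold_gen[OF GF GT False sp a(2)])
      have e2: "prec_aux (spread (A@B)) A B = lexle prec (lexmax prec (splitn (Min (set (A@B))) A)) (lexmax prec (splitn (Min (set (A@B))) B))"
        by (rule unfold_gen[OF GF GT False sp order.refl])
      show ?thesis using e1 e2 prec_spread[OF False] by simp
    qed
  qed
  have T: "GoodT (Suc M)"
    unfolding GoodT_def
  proof (intro allI impI)
    fix A B C assume a: "spread (A@B@C) < Suc M"
    show "(prec A B \<or> prec B A) \<and> (prec A B \<longrightarrow> prec B C \<longrightarrow> prec A C)"
    proof (cases "A@B@C = []")
      case True then show ?thesis by (simp add: prec_Nil)
    next
      case ne: False
      define m where "m = Min (set (A@B@C))"
      define L where "L X = lexmax prec (splitn m X)" for X
      define S where "S = set (splitn m A) \<union> set (splitn m B) \<union> set (splitn m C)"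
      have lev: "prec X Y = lexle prec (L X) (L Y)" if "X \<in> {A,B,C}" "Y \<in> {A,B,C}" for X Y
      proof -
        have s: "set (X@Y) \<subseteq> set (A@B@C)" using that by auto
        have "spread (X@Y) \<le> M" using spread_mono[OF s] a by simp
        moreover have "\<forall>y\<in>set (X@Y). m \<le> y" using s unfolding m_def by auto
        ultimately show ?thesis unfolding L_def by (rule level_gen[OF GF GT])
      qed
      have Sel: "\<forall>p\<in>S. \<forall>y\<in>set p. y \<in> set (A@B@C) \<and> Min (set (A@B@C)) < y"
      proof (intro ballI)
        fix p y assume p: "p \<in> S" and y: "y \<in> set p"
        have "\<forall>y\<in>set A. m \<le> y" "\<forall>y\<in>set B. m \<le> y" "\<forall>y\<in>set C. m \<le> y" unfolding m_def by auto
        then show "y \<in> set (A@B@C) \<and> Min (set (A@B@C)) < y"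
          using pieces_gt[of p m A] pieces_gt[of p m B] pieces_gt[of p m C] p y unfolding S_def m_def by auto
      qed
      have tt: "\<forall>x\<in>S. \<forall>y\<in>S. \<forall>z\<in>S. (prec x y \<or> prec y x) \<and> (prec x y \<longrightarrow> prec y z \<longrightarrow> prec x z)"
      proof (intro ballI)
        fix x y z assume "x \<in> S" "y \<in> S" "z \<in> S"
        then have "spread (x@y@z) < spread (A@B@C)" using triple_spread(1)[OF ne Sel] by blast
        then have "spread (x@y@z) < M" using a by linarith
        then show "(prec x y \<or> prec y x) \<and> (prec x y \<longrightarrow> prec y z \<longrightarrow> prec x z)"
          using GT unfolding GoodT_def by blast
      qed
      have mem: "set (L X) \<subseteq> S" if "X \<in> {A,B,C}" for X
      proof -
        have sub: "set (splitn m X) \<subseteq> S" using that S_def by auto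
        have "L X \<in> set (subseqs (splitn m X))"
          unfolding L_def using lexmax_prop[of "splitn m X" prec] tt sub by blast
        then show ?thesis using subseqs_set sub by blast
      qed
      have mA: "set (L A) \<subseteq> S" and mB: "set (L B) \<subseteq> S" and mC: "set (L C) \<subseteq> S"
        by (rule mem, simp)+
      have totS: "\<forall>x\<in>S. \<forall>y\<in>S. prec x y \<or> prec y x" using tt by blast
      have trS: "\<forall>x\<in>S. \<forall>y\<in>S. \<forall>z\<in>S. prec x y \<longrightarrow> prec y z \<longrightarrow> prec x z" using tt by blast
      have tot: "lexle prec (L A) (L B) \<or> lexle prec (L B) (L A)"
        by (rule lexle_total[OF totS mA mB])
      have tr: "lexle prec (L A) (L B) \<Longrightarrow> lexle prec (L B) (L C) \<Longrightarrow> lexle prec (L A) (L C)"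
        by (rule lexle_trans[OF trS mA mB mC])
      have l1: "prec A B = lexle prec (L A) (L B)" by (rule lev) simp_all
      have l2: "prec B A = lexle prec (L B) (L A)" by (rule lev) simp_all
      have l3: "prec B C = lexle prec (L B) (L C)" by (rule lev) simp_all
      have l4: "prec A C = lexle prec (L A) (L C)" by (rule lev) simp_all
      show ?thesis using tot tr l1 l2 l3 l4 by blast
    qed
  qed
  show ?case using F T by blast
qed

lemma prec_aux_fuel: "spread (A@B) \<le> d \<Longrightarrow> prec_aux d A B = prec A B"
  using good[of "Suc (spread (A@B))"] unfolding GoodF_def by auto

lemma prec_total: "prec A B \<or> prec B A"
  using good[of "Suc (spread (A@B@B))"] unfolding GoodT_def by auto

lemma prec_trans: "prec A B \<Longrightarrow> prec B C \<Longrightarrow> prec A C"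
  using good[of "Suc (spread (A@B@C))"] unfolding GoodT_def by auto

lemma prec_level: "\<forall>y\<in>set (X@Y). m \<le> y \<Longrightarrow>
  prec X Y = lexle prec (lexmax prec (splitn m X)) (lexmax prec (splitn m Y))"
proof -
  assume a: "\<forall>y\<in>set (X@Y). m \<le> y"
  have g: "GoodF (Suc (spread (X@Y)))" "GoodT (Suc (spread (X@Y)))" using good by blast+
  show ?thesis by (rule level_gen[OF g _ a]) simp
qed

lemma lexmax_max: "lexmax prec xs \<in> set (subseqs xs) \<and> (\<forall>D\<in>set (subseqs xs). lexle prec D (lexmax prec xs))"
  using lexmax_prop[of xs prec] prec_total prec_trans by blast

lemma lexle_prec_trans: "lexle prec xs ys \<Longrightarrow> lexle prec ys zs \<Longrightarrow> lexle prec xs zs"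
  using lexle_trans[of UNIV prec xs ys zs] prec_trans by blast


lemma Nil_subseqs: "[] \<in> set (subseqs xs)"
  by (induct xs) (auto simp: Let_def)

lemma single_subseqs: "y \<in> set xs \<Longrightarrow> [y] \<in> set (subseqs xs)"
proof (induct xs)
  case Nil then show ?case by simp
next
  case (Cons x xs)
  show ?case
  proof (cases "y = x")
    case True then show ?thesis using subseqs_Cons_mem2[OF Nil_subseqs[of xs]] by simp
  next
    case False then show ?thesis using Cons subseqs_Cons_mem1 by auto
  qed
qed

lemma Cons_subseqs_split: "y # ys \<in> set (subseqs xs) \<Longrightarrow> \<exists>xs1 xs2. xs = xs1 @ y # xs2 \<and> ys \<in> set (subseqs xs2)"
proof (induct xs)
  case Nil then show ?case by simp
next
  case (Cons x xs)
  from Cons.prems show ?case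
  proof (rule subseqs_Cons_cases)
    fix D' assume "y # ys = x # D'" "D' \<in> set (subseqs xs)"
    then show ?thesis by (intro exI[of _ "[]"] exI[of _ xs]) simp
  next
    assume "y # ys \<in> set (subseqs xs)"
    then obtain xs1 xs2 where "xs = xs1 @ y # xs2" "ys \<in> set (subseqs xs2)" using Cons.hyps by blast
    then show ?thesis by (intro exI[of _ "x # xs1"] exI[of _ xs2]) simp
  qed
qed

lemma pless_prec_irrefl: "\<not> pless prec a a"
  by (simp add: pless_def)

lemma lexmax_last:
  assumes ne: "xs \<noteq> []" and lt: "\<forall>x\<in>set (butlast xs). pless prec x (last xs)"
  shows "lexmax prec xs = [last xs]"
proof -
  define L where "L = lexmax prec xs"
  have Lm: "L \<in> set (subseqs xs)" "\<forall>D\<in>set (subseqs xs). lexle prec D L"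
    using lexmax_max[of xs] unfolding L_def by auto
  have lastin: "last xs \<in> set xs" using ne by simp
  have "lexle prec [last xs] L" using Lm(2) single_subseqs[OF lastin] by blast
  then obtain c L' where L: "L = c # L'" and cl: "prec (last xs) c"
    by (cases L) (auto simp: pless_def pequiv_def)
  have xs_eq: "xs = butlast xs @ [last xs]" using ne by simp
  have "c \<in> set xs" using subseqs_set[OF Lm(1)] L by auto
  moreover have "c \<notin> set (butlast xs)"
    using lt cl by (auto simp: pless_def)
  ultimately have "c \<in> set (butlast xs @ [last xs])" "c \<notin> set (butlast xs)" using xs_eq by simp_all
  then have c: "c = last xs" by simp
  have nb: "last xs \<notin> set (butlast xs)" using lt pless_prec_irrefl by blast
  obtain xs1 xs2 where sp: "xs = xs1 @ c # xs2" "L' \<in> set (subseqs xs2)"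
    using Cons_subseqs_split[of c L' xs] Lm(1) L by blast
  have "xs2 = []"
  proof (rule ccontr)
    assume "xs2 \<noteq> []"
    then have "butlast xs = xs1 @ c # butlast xs2" using sp(1) by (simp add: butlast_append)
    then show False using nb c by simp
  qed
  then have "L' = []" using sp(2) by simp
  then show ?thesis using L c L_def by simp
qed

definition noninc :: "nat list list \<Rightarrow> bool" where
  "noninc xs \<longleftrightarrow> sorted_wrt (\<lambda>a b. prec b a) xs"

lemma noninc_Cons: "noninc (x # xs) \<Longrightarrow> (\<forall>y\<in>set xs. prec y x) \<and> noninc xs"
  unfolding noninc_def by simp

lemma noninc_subseq_le: "noninc xs \<Longrightarrow> D \<in> set (subseqs xs) \<Longrightarrow> lexle prec D xs"
proof (induct xs arbitrary: D)
  case Nil then show ?case by simp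
next
  case (Cons x xs)
  note IH = Cons.hyps
  have sx: "\<forall>y\<in>set xs. prec y x" and sxs: "noninc xs" using noninc_Cons[OF Cons.prems(1)] by auto
  from Cons.prems(2) show ?case
  proof (rule subseqs_Cons_cases)
    fix D' assume D: "D = x # D'" "D' \<in> set (subseqs xs)"
    then have "lexle prec D' xs" using IH[OF sxs] by blast
    moreover have "pequiv prec x x" using prec_refl by (simp add: pequiv_def)
    ultimately show ?thesis using D(1) by simp
  next
    assume D: "D \<in> set (subseqs xs)"
    show ?thesis
    proof (cases D)
      case Nil then show ?thesis by simp
    next
      case (Cons d D'')
      have "d \<in> set xs" using subseqs_set[OF D] Cons by auto
      then have dx: "prec d x" using sx by blast
      have "d # D'' \<in> set (subseqs xs)" using D Cons by simp
      then have "D'' \<in> set (subseqs xs)" by (rule Cons_in_subseqsD)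
      then have "lexle prec D'' xs" using IH[OF sxs] by blast
      then have "pless prec d x \<or> (pequiv prec d x \<and> lexle prec D'' xs)" using dx by (auto simp: pless_def pequiv_def)
      then show ?thesis using Cons by simp
    qed
  qed
qed

lemma lexmax_noninc: "noninc xs \<Longrightarrow> list_all2 (pequiv prec) (lexmax prec xs) xs"
proof -
  assume n: "noninc xs"
  have m: "lexmax prec xs \<in> set (subseqs xs)" "lexle prec xs (lexmax prec xs)"
    using lexmax_max[of xs] subseqs_refl by auto
  have "lexle prec (lexmax prec xs) xs" using noninc_subseq_le[OF n m(1)] .
  then show ?thesis using lexle_antisym m(2) by blast
qed

lemma pequiv_sym: "pequiv R a b \<Longrightarrow> pequiv R b a"
  by (simp add: pequiv_def)

lemma list_all2_pequiv_sym: "list_all2 (pequiv R) xs ys \<Longrightarrow> list_all2 (pequiv R) ys xs"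
  by (simp add: list_all2_conv_all_nth pequiv_def)

lemma lexle_eqv_left: "list_all2 (pequiv prec) xs xs' \<Longrightarrow> lexle prec xs ys = lexle prec xs' ys"
proof -
  assume l: "list_all2 (pequiv prec) xs xs'"
  have a: "lexle prec xs xs'" by (rule list_all2_lexle[OF l])
  have b: "lexle prec xs' xs" by (rule list_all2_lexle[OF list_all2_pequiv_sym[OF l]])
  show ?thesis using lexle_prec_trans[OF a, of ys] lexle_prec_trans[OF b, of ys] by blast
qed

lemma lexle_eqv_right: "list_all2 (pequiv prec) ys ys' \<Longrightarrow> lexle prec xs ys = lexle prec xs ys'"
proof -
  assume l: "list_all2 (pequiv prec) ys ys'"
  have a: "lexle prec ys ys'" by (rule list_all2_lexle[OF l])
  have b: "lexle prec ys' ys" by (rule list_all2_lexle[OF list_all2_pequiv_sym[OF l]])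
  show ?thesis using lexle_prec_trans[OF _ a, of xs] lexle_prec_trans[OF _ b, of xs] by blast
qed

lemma level_noninc:
  assumes "\<forall>y\<in>set (X@Y). m \<le> y" "noninc (splitn m X)" "noninc (splitn m Y)"
  shows "prec X Y = lexle prec (splitn m X) (splitn m Y)"
  using prec_level[OF assms(1)] lexle_eqv_left[OF lexmax_noninc[OF assms(2)]]
    lexle_eqv_right[OF lexmax_noninc[OF assms(3)]] by simp

lemma transp_rprec: "transp (\<lambda>a b. prec b a)"
  by (rule transpI) (metis prec_trans)

lemma noninc_iff_adj: "noninc xs \<longleftrightarrow> (\<forall>i. Suc i < length xs \<longrightarrow> prec (xs ! Suc i) (xs ! i))"
  unfolding noninc_def using sorted_wrt_iff_nth_Suc_transp[OF transp_rprec] by simp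

lemma NF_pieces:
  assumes X: "X \<in> NF" and ge: "\<forall>y\<in>set X. m \<le> y"
  shows "noninc (splitn m X) \<and> (\<forall>p\<in>set (splitn m X). p \<in> NF)"
proof (cases "m \<in> set X")
  case False
  then show ?thesis using X by (simp add: splitn_no noninc_def)
next
  case True
  then have ne: "X \<noteq> []" by auto
  have mn: "Min (set X) = m" using True ge by (intro Min_eqI) auto
  from X show ?thesis
  proof cases
    case NF_empty then show ?thesis using ne by simp
  next
    case NF_step
    then show ?thesis using mn by (simp add: noninc_iff_adj)
  qed
qed

lemma wequiv_sym: "wequiv A B \<Longrightarrow> wequiv B A"
  by (simp add: wequiv_def)

lemma wequiv_trans: "wequiv A B \<Longrightarrow> wequiv B C \<Longrightarrow> wequiv A C"
  by (meson prec_trans wequiv_def)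

lemma NF_unique: "B \<in> NF \<Longrightarrow> K \<in> NF \<Longrightarrow> wequiv B K \<Longrightarrow> B = K"
proof (induct "length B + length K" arbitrary: B K rule: less_induct)
  case less
  show ?case
  proof (cases "B @ K = []")
    case True then show ?thesis by simp
  next
    case ne: False
    define n where "n = Min (set (B@K))"
    have ge: "\<forall>y\<in>set (B@K). n \<le> y" "\<forall>y\<in>set (K@B). n \<le> y" unfolding n_def by auto
    have nin: "n \<in> set (B@K)" unfolding n_def using ne by (intro Min_in) auto
    have geB: "\<forall>y\<in>set B. n \<le> y" and geK: "\<forall>y\<in>set K. n \<le> y" using ge by auto
    have pB: "noninc (splitn n B)" "\<forall>p\<in>set (splitn n B). p \<in> NF" using NF_pieces[OF less.prems(1) geB] by auto
    have pK: "noninc (splitn n K)" "\<forall>p\<in>set (splitn n K). p \<in> NF" using NF_pieces[OF less.prems(2) geK] by auto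
    have "prec B K = lexle prec (splitn n B) (splitn n K)" by (rule level_noninc[OF ge(1) pB(1) pK(1)])
    moreover have "prec K B = lexle prec (splitn n K) (splitn n B)" by (rule level_noninc[OF ge(2) pK(1) pB(1)])
    ultimately have la: "list_all2 (pequiv prec) (splitn n B) (splitn n K)"
      using less.prems(3) lexle_antisym unfolding wequiv_def by blast
    then have len: "length (splitn n B) = length (splitn n K)" by (rule list_all2_lengthD)
    have nB: "n \<in> set B"
    proof (rule ccontr)
      assume a: "n \<notin> set B"
      then have "n \<in> set K" using nin by simp
      then show False using splitn_length[of n K] splitn_no[OF a] len by simp
    qed
    have nK: "n \<in> set K"
    proof (rule ccontr)
      assume a: "n \<notin> set K"
      then show False using splitn_length[OF nB] splitn_no[OF a] len by simp
    qed
    have eq: "splitn n B = splitn n K"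
    proof (rule nth_equalityI[OF len])
      fix i assume i: "i < length (splitn n B)"
      let ?p = "splitn n B ! i" and ?q = "splitn n K ! i"
      have pin: "?p \<in> set (splitn n B)" using i by simp
      have qin: "?q \<in> set (splitn n K)" using i len by simp
      have "pequiv prec ?p ?q" using la i by (simp add: list_all2_conv_all_nth)
      then have w: "wequiv ?p ?q" by (simp add: pequiv_def wequiv_def)
      have "length ?p < length B" using splitn_pieces_length[OF pin] nB by simp
      moreover have "length ?q < length K" using splitn_pieces_length[OF qin] nK by simp
      ultimately have "length ?p + length ?q < length B + length K" by simp
      moreover have "?p \<in> NF" using pB(2) pin by blast
      moreover have "?q \<in> NF" using pK(2) qin by blast
      ultimately show "?p = ?q" using less.hyps w by blast
    qed
    have "B = joinw n (splitn n B)" by (simp add: joinw_splitn)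
    also have "\<dots> = joinw n (splitn n K)" using eq by simp
    also have "\<dots> = K" by (simp add: joinw_splitn)
    finally show ?thesis .
  qed
qed


definition rep3 :: "nat \<Rightarrow> nat list" where "rep3 e = replicate e 3"
definition Ww :: "nat list \<Rightarrow> nat list" where "Ww es = joinw 2 (map rep3 es)"

lemma set_rep3: "set (rep3 e) \<subseteq> {3}"
  by (auto simp: rep3_def)

lemma splitn3_rep3: "splitn 3 (rep3 a) = replicate (Suc a) []"
  by (induct a) (auto simp: rep3_def)

lemma noninc_repl_Nil: "noninc (replicate n [])"
  by (simp add: noninc_iff_adj prec_refl)

lemma pless_le_nat[simp]: "pless (\<le>) (a::nat) b \<longleftrightarrow> a < b"
  by (auto simp: pless_def)

lemma pequiv_le_nat[simp]: "pequiv (\<le>) (a::nat) b \<longleftrightarrow> a = b"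
  by (auto simp: pequiv_def)

lemma pless_Nil_Nil: "\<not> pless prec [] []" by (simp add: pless_def)
lemma pequiv_Nil_Nil: "pequiv prec [] []" by (simp add: pequiv_def prec_Nil)

lemma lexle_repl_Nil: "lexle prec (replicate (Suc a) []) (replicate (Suc b) []) \<longleftrightarrow> a \<le> b"
proof (induct a arbitrary: b)
  case 0 then show ?case by (cases b) (simp_all add: pless_Nil_Nil pequiv_Nil_Nil)
next
  case (Suc a)
  then show ?case by (cases b) (simp_all add: pless_Nil_Nil pequiv_Nil_Nil)
qed

lemma prec_rep3: "prec (rep3 a) (rep3 b) \<longleftrightarrow> a \<le> b"
proof -
  have ge: "\<forall>y\<in>set (rep3 a @ rep3 b). 3 \<le> y" by (auto simp: rep3_def)
  have "prec (rep3 a) (rep3 b) = lexle prec (splitn 3 (rep3 a)) (splitn 3 (rep3 b))"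
    by (rule level_noninc[OF ge]) (simp only: splitn3_rep3 noninc_repl_Nil)+
  then show ?thesis by (simp only: splitn3_rep3 lexle_repl_Nil)
qed

lemma rep3_NF: "rep3 a \<in> NF"
proof (cases a)
  case 0 then show ?thesis by (simp add: rep3_def NF_empty)
next
  case (Suc a')
  have ne: "rep3 a \<noteq> []" using Suc by (simp add: rep3_def)
  have "set (rep3 a) = {3}" using Suc unfolding rep3_def by (intro set_replicate) simp
  then have mn: "Min (set (rep3 a)) = 3" by simp
  show ?thesis
  proof (rule NF_step[OF ne])
    show "\<forall>i. Suc i < length (splitn (Min (set (rep3 a))) (rep3 a)) \<longrightarrow>
      prec (splitn (Min (set (rep3 a))) (rep3 a) ! Suc i) (splitn (Min (set (rep3 a))) (rep3 a) ! i)"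
      unfolding mn splitn3_rep3 by (simp add: prec_Nil del: replicate_Suc)
    show "\<forall>p\<in>set (splitn (Min (set (rep3 a))) (rep3 a)). p \<in> NF"
      by (simp add: mn splitn3_rep3 NF_empty)
  qed
qed

lemma set_Ww: "set (Ww es) \<subseteq> {2,3}"
proof -
  have "set (Ww es) \<subseteq> \<Union>(set ` set (map rep3 es)) \<union> {2}" unfolding Ww_def by (rule set_joinw)
  moreover have "\<Union>(set ` set (map rep3 es)) \<subseteq> {3}" using set_rep3 by auto
  ultimately show ?thesis by auto
qed

lemma splitn_Ww: "es \<noteq> [] \<Longrightarrow> splitn 2 (Ww es) = map rep3 es"
  unfolding Ww_def by (rule splitn_joinw) (auto simp: rep3_def)

lemma noninc_map_rep3: "sorted_wrt (\<ge>) es \<Longrightarrow> noninc (map rep3 es)"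
  unfolding noninc_def sorted_wrt_map by (simp add: prec_rep3)

lemma prec_Ww:
  assumes "es \<noteq> []" "fs \<noteq> []" "sorted_wrt (\<ge>) es" "sorted_wrt (\<ge>) fs"
  shows "prec (Ww es) (Ww fs) \<longleftrightarrow> lexle (\<le>) es fs"
proof -
  have ge: "\<forall>y\<in>set (Ww es @ Ww fs). 2 \<le> y" using set_Ww[of es] set_Ww[of fs] by auto
  have "prec (Ww es) (Ww fs) = lexle prec (splitn 2 (Ww es)) (splitn 2 (Ww fs))"
    by (rule level_noninc[OF ge]) (simp_all add: splitn_Ww assms noninc_map_rep3)
  also have "\<dots> = lexle prec (map rep3 es) (map rep3 fs)" by (simp add: splitn_Ww assms)
  also have "\<dots> = lexle (\<lambda>a b. prec (rep3 a) (rep3 b)) es fs" by (rule lexle_map)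
  also have "(\<lambda>a b. prec (rep3 a) (rep3 b)) = (\<le>)" by (simp add: prec_rep3)
  finally show ?thesis .
qed

lemma Ww_single: "Ww [e] = rep3 e"
  by (simp add: Ww_def)

lemma Ww_NF:
  assumes ne: "es \<noteq> []" and so: "sorted_wrt (\<ge>) es"
  shows "Ww es \<in> NF"
proof (cases "length es = 1")
  case True
  then obtain e where "es = [e]" by (cases es) auto
  then show ?thesis by (simp add: Ww_single rep3_NF)
next
  case False
  then obtain e1 e2 r where es: "es = e1 # e2 # r" using ne by (cases es; cases "tl es") auto
  have two: "2 \<in> set (Ww es)" using es by (simp add: Ww_def)
  then have ne2: "Ww es \<noteq> []" by auto
  have mn: "Min (set (Ww es)) = 2" using two set_Ww[of es] by (intro Min_eqI) auto
  have sp: "splitn (Min (set (Ww es))) (Ww es) = map rep3 es" using mn splitn_Ww[OF ne] by simp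
  show ?thesis
  proof (rule NF_step[OF ne2])
    show "\<forall>i. Suc i < length (splitn (Min (set (Ww es))) (Ww es)) \<longrightarrow>
      prec (splitn (Min (set (Ww es))) (Ww es) ! Suc i) (splitn (Min (set (Ww es))) (Ww es) ! i)"
    proof (intro allI impI)
      fix i assume i: "Suc i < length (splitn (Min (set (Ww es))) (Ww es))"
      then have i': "Suc i < length es" using sp by simp
      have "es ! i \<ge> es ! Suc i" using sorted_wrt_nth_less[OF so _ i'] by simp
      then show "prec (splitn (Min (set (Ww es))) (Ww es) ! Suc i) (splitn (Min (set (Ww es))) (Ww es) ! i)"
        using sp i' by (simp add: prec_rep3)
    qed
    show "\<forall>p\<in>set (splitn (Min (set (Ww es))) (Ww es)). p \<in> NF"
      using sp rep3_NF by auto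
  qed
qed

lemma lexle_nat_prefix: "lexle (\<le>) (xs::nat list) (xs @ ys)"
  by (rule lexle_append) simp

lemma not_lexle_nat_ext: "ys \<noteq> [] \<Longrightarrow> \<not> lexle (\<le>) ((xs::nat list) @ ys) xs"
  by (induct xs) (auto simp: neq_Nil_conv)

lemma lexle_nat_lt: "(a::nat) < b \<Longrightarrow> lexle (\<le>) (xs @ a # ys) (xs @ b # zs) \<and> \<not> lexle (\<le>) (xs @ b # zs) (xs @ a # ys)"
  by (induct xs) auto


lemma upt_split3: "a \<le> b \<Longrightarrow> b \<le> c \<Longrightarrow> [a..<c] = [a..<b] @ [b..<c]"
  using upt_add_eq_append[of a b "c-b"] by simp

lemma sorted_dsc: "sorted_wrt (\<ge>) (rev [a..<h])"
  by (simp add: sorted_wrt_rev)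

lemma sorted_repl: "sorted_wrt (\<ge>) (replicate j (c::nat))"
  by (induct j) auto

definition esQ :: "nat \<Rightarrow> nat \<Rightarrow> nat list" where "esQ h k = rev [k-1..<h]"
definition esK :: "nat \<Rightarrow> nat \<Rightarrow> nat list" where "esK h k = rev [k..<h] @ [k]"
definition esP :: "nat \<Rightarrow> nat \<Rightarrow> nat \<Rightarrow> nat list" where "esP h m j = rev [m-1..<h] @ replicate j (m-1)"
definition Pw :: "nat \<Rightarrow> nat \<Rightarrow> nat \<Rightarrow> nat list" where "Pw h m j = Ww (esP h m j)"
definition Qw :: "nat \<Rightarrow> nat \<Rightarrow> nat list" where "Qw h k = Ww (esQ h k)"

lemma esQ_ne: "1 \<le> k \<Longrightarrow> k \<le> h \<Longrightarrow> esQ h k \<noteq> []" by (simp add: esQ_def)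
lemma esK_ne: "esK h k \<noteq> []" by (simp add: esK_def)
lemma esP_ne: "1 \<le> m \<Longrightarrow> m \<le> h \<Longrightarrow> esP h m j \<noteq> []"
proof -
  assume "1 \<le> m" "m \<le> h"
  then have "m - 1 < h" by simp
  then show ?thesis by (simp add: esP_def)
qed

lemma esQ_sorted: "sorted_wrt (\<ge>) (esQ h k)" by (simp add: esQ_def sorted_dsc)
lemma esK_sorted: "sorted_wrt (\<ge>) (esK h k)"
  unfolding esK_def sorted_wrt_append using sorted_dsc by auto
lemma esP_sorted: "sorted_wrt (\<ge>) (esP h m j)"
  unfolding esP_def sorted_wrt_append using sorted_dsc sorted_repl by auto

lemma Kw_eq: "Ww (esK h k) = Kw h k"
proof -
  have "map rep3 (esK h k) = map rep3 (rev [k..<h]) @ [rep3 k]" by (simp add: esK_def)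
  then have "Ww (esK h k) = concat (map (\<lambda>x. rep3 x @ [2]) (rev [k..<h])) @ rep3 k"
    unfolding Ww_def by (simp only: joinw_snoc)
  also have "\<dots> = Kw h k" by (simp add: Kw_def Iw_def[abs_def] rep3_def)
  finally show ?thesis .
qed

lemma esQ_snoc: "1 \<le> k \<Longrightarrow> k \<le> h \<Longrightarrow> esQ h k = rev [k..<h] @ [k-1]"
proof -
  assume a: "1 \<le> k" "k \<le> h"
  have "[k-1..<h] = (k-1) # [Suc (k-1)..<h]" using a by (intro upt_conv_Cons) simp
  moreover have "Suc (k-1) = k" using a by simp
  ultimately show ?thesis by (simp add: esQ_def)
qed

lemma Q3: "1 \<le> k \<Longrightarrow> k \<le> h \<Longrightarrow> Qw h k @ [3] = Kw h k"
proof -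
  assume a: "1 \<le> k" "k \<le> h"
  have "map rep3 (esQ h k) = map rep3 (rev [k..<h]) @ [rep3 (k-1)]" by (simp add: esQ_snoc[OF a])
  then have "Qw h k = concat (map (\<lambda>x. rep3 x @ [2]) (rev [k..<h])) @ rep3 (k-1)"
    unfolding Qw_def Ww_def by (simp only: joinw_snoc)
  moreover have "rep3 (k-1) @ [3] = replicate k 3"
  proof -
    obtain k' where k': "k = Suc k'" using a by (cases k) auto
    then show ?thesis by (simp add: rep3_def replicate_append_same)
  qed
  ultimately show ?thesis by (simp add: Kw_def Iw_def[abs_def] rep3_def)
qed

lemma esP_eq_Q: "1 \<le> m \<Longrightarrow> m \<le> k \<Longrightarrow> k \<le> h \<Longrightarrow> esP h m j = esQ h k @ (rev [m-1..<k-1] @ replicate j (m-1))"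
proof -
  assume a: "1 \<le> m" "m \<le> k" "k \<le> h"
  have "[m-1..<h] = [m-1..<k-1] @ [k-1..<h]" using a by (intro upt_split3) auto
  then show ?thesis by (simp add: esP_def esQ_def)
qed

lemma esP_eq_K: "1 \<le> m \<Longrightarrow> m \<le> k \<Longrightarrow> k \<le> h \<Longrightarrow> esP h m j = rev [k..<h] @ (k-1) # (rev [m-1..<k-1] @ replicate j (m-1))"
  using esP_eq_Q esQ_snoc by simp

lemma esP_ext: "j \<le> j' \<Longrightarrow> esP h m j' = esP h m j @ replicate (j'-j) (m-1)"
proof -
  assume "j \<le> j'"
  then have "replicate j' (m-1) = replicate j (m-1) @ replicate (j'-j) (m-1)"
    using replicate_add[of j "j'-j" "m-1"] by simp
  then show ?thesis by (simp add: esP_def)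
qed

lemma set_Pw: "set (Pw h m j) \<subseteq> {2,3}" by (simp add: Pw_def set_Ww)
lemma set_Qw: "set (Qw h k) \<subseteq> {2,3}" by (simp add: Qw_def set_Ww)
lemma set_Kw: "set (Kw h k) \<subseteq> {2,3}" using set_Ww[of "esK h k"] by (simp add: Kw_eq)

lemma pless_def2: "prec a b \<Longrightarrow> \<not> prec b a \<Longrightarrow> pless prec a b" by (simp add: pless_def)

context
  fixes h m :: nat
  assumes m1: "1 \<le> m" and mh: "m \<le> h"
begin

lemma prec_QP: "m \<le> k \<Longrightarrow> k \<le> h \<Longrightarrow> prec (Qw h k) (Pw h m j)"
proof -
  assume a: "m \<le> k" "k \<le> h"
  have "prec (Qw h k) (Pw h m j) = lexle (\<le>) (esQ h k) (esP h m j)"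
    unfolding Qw_def Pw_def using a m1 mh
    by (intro prec_Ww esQ_ne esP_ne esQ_sorted esP_sorted) auto
  then show ?thesis using esP_eq_Q[OF m1 a] lexle_nat_prefix by simp
qed

lemma pless_PP: "j < j' \<Longrightarrow> pless prec (Pw h m j) (Pw h m j')"
proof -
  assume a: "j < j'"
  have e: "esP h m j' = esP h m j @ replicate (j'-j) (m-1)" using a by (intro esP_ext) simp
  have ne: "replicate (j'-j) (m-1) \<noteq> []" using a by simp
  have p1: "prec (Pw h m j) (Pw h m j') = lexle (\<le>) (esP h m j) (esP h m j')"
    unfolding Pw_def using m1 mh by (intro prec_Ww esP_ne esP_sorted) auto
  have p2: "prec (Pw h m j') (Pw h m j) = lexle (\<le>) (esP h m j') (esP h m j)"
    unfolding Pw_def using m1 mh by (intro prec_Ww esP_ne esP_sorted) auto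
  show ?thesis using p1 p2 e lexle_nat_prefix not_lexle_nat_ext[OF ne] by (simp add: pless_def)
qed

lemma pless_PK: "m \<le> k \<Longrightarrow> k \<le> h \<Longrightarrow> pless prec (Pw h m j) (Kw h k)"
proof -
  assume a: "m \<le> k" "k \<le> h"
  have p1: "prec (Pw h m j) (Kw h k) = lexle (\<le>) (esP h m j) (esK h k)"
    unfolding Pw_def Kw_eq[symmetric] using m1 mh by (intro prec_Ww esP_ne esK_ne esP_sorted esK_sorted) auto
  have p2: "prec (Kw h k) (Pw h m j) = lexle (\<le>) (esK h k) (esP h m j)"
    unfolding Pw_def Kw_eq[symmetric] using m1 mh by (intro prec_Ww esP_ne esK_ne esP_sorted esK_sorted) auto
  have k1: "k - 1 < k" using a m1 by simp
  have "esK h k = rev [k..<h] @ k # []" by (simp add: esK_def)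
  then show ?thesis using p1 p2 esP_eq_K[OF m1 a] lexle_nat_lt[OF k1, of "rev [k..<h]"] by (simp add: pless_def)
qed

definition Ax :: "nat \<Rightarrow> nat \<Rightarrow> nat list" where "Ax j kk = Pw h m j @ 1 # Qw h kk"

lemma set_Ax: "set (Ax j kk) \<subseteq> {1,2,3}"
  using set_Pw[of h m j] set_Qw[of h kk] by (auto simp: Ax_def)

lemma splitn1_Ax: "splitn 1 (Ax j kk) = [Pw h m j, Qw h kk]"
proof -
  have "1 \<notin> set (Pw h m j)" "1 \<notin> set (Qw h kk)" using set_Pw[of h m j] set_Qw[of h kk] by auto
  then show ?thesis unfolding Ax_def by (simp add: splitn_append_sep splitn_no)
qed

lemmas splitn1_Ax' = splitn1_Ax[unfolded One_nat_def]

lemma Ax3: "1 \<le> kk \<Longrightarrow> kk \<le> h \<Longrightarrow> Ax j kk @ [3] = Pw h m j @ 1 # Kw h kk"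
  using Q3 by (simp add: Ax_def)

lemma splitn1_Ax3: "1 \<le> kk \<Longrightarrow> kk \<le> h \<Longrightarrow> splitn 1 (Ax j kk @ [3]) = [Pw h m j, Kw h kk]"
proof -
  assume a: "1 \<le> kk" "kk \<le> h"
  have "1 \<notin> set (Pw h m j)" "1 \<notin> set (Kw h kk)" using set_Pw[of h m j] set_Kw[of h kk] by auto
  then show ?thesis unfolding Ax3[OF a] by (simp add: splitn_append_sep splitn_no)
qed

lemma noninc2: "prec b a \<Longrightarrow> noninc [a, b]"
  by (simp add: noninc_def)

lemma Ax_NF: "m \<le> kk \<Longrightarrow> kk \<le> h \<Longrightarrow> Ax j kk \<in> NF"
proof -
  assume a: "m \<le> kk" "kk \<le> h"
  have ne: "Ax j kk \<noteq> []" by (simp add: Ax_def)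
  have mn: "Min (set (Ax j kk)) = 1" using set_Ax[of j kk] by (intro Min_eqI) (auto simp: Ax_def)
  show ?thesis
  proof (rule NF_step[OF ne])
    show "\<forall>i. Suc i < length (splitn (Min (set (Ax j kk))) (Ax j kk)) \<longrightarrow>
      prec (splitn (Min (set (Ax j kk))) (Ax j kk) ! Suc i) (splitn (Min (set (Ax j kk))) (Ax j kk) ! i)"
      unfolding mn splitn1_Ax using prec_QP[OF a] by (auto simp: less_Suc_eq)
    have "Pw h m j \<in> NF" unfolding Pw_def using m1 mh by (intro Ww_NF esP_ne esP_sorted) auto
    moreover have "Qw h kk \<in> NF" unfolding Qw_def using a m1 by (intro Ww_NF esQ_ne esQ_sorted) auto
    ultimately show "\<forall>p\<in>set (splitn (Min (set (Ax j kk))) (Ax j kk)). p \<in> NF"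
      unfolding mn splitn1_Ax by simp
  qed
qed

lemma ge1_Ax: "\<forall>y\<in>set (Ax j kk @ Ax j' kk'). 1 \<le> y"
  using set_Ax[of j kk] set_Ax[of j' kk'] by auto

lemma prec_Ax_Suc: "m \<le> kk \<Longrightarrow> kk \<le> h \<Longrightarrow> m \<le> kk' \<Longrightarrow> kk' \<le> h \<Longrightarrow> prec (Ax j kk) (Ax (Suc j) kk')"
proof -
  assume a: "m \<le> kk" "kk \<le> h" "m \<le> kk'" "kk' \<le> h"
  have "prec (Ax j kk) (Ax (Suc j) kk') = lexle prec (splitn 1 (Ax j kk)) (splitn 1 (Ax (Suc j) kk'))"
    by (rule level_noninc[OF ge1_Ax]) (simp_all only: splitn1_Ax noninc2 prec_QP a)
  moreover have "pless prec (Pw h m j) (Pw h m (Suc j))" by (rule pless_PP) simp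
  ultimately show ?thesis by (simp add: splitn1_Ax splitn1_Ax')
qed

lemma pless_Ax3: "m \<le> kk \<Longrightarrow> kk \<le> h \<Longrightarrow> m \<le> kk' \<Longrightarrow> kk' \<le> h \<Longrightarrow> pless prec (Ax j kk') (Ax i kk @ [3])"
proof -
  assume a: "m \<le> kk" "kk \<le> h" "m \<le> kk'" "kk' \<le> h"
  have kk1: "1 \<le> kk" using a m1 by simp
  have ge: "\<forall>y\<in>set (Ax j kk' @ (Ax i kk @ [3])). 1 \<le> y" "\<forall>y\<in>set ((Ax i kk @ [3]) @ Ax j kk'). 1 \<le> y"
    using set_Ax[of j kk'] set_Ax[of i kk] by auto
  have PK: "pless prec (Pw h m i) (Kw h kk)" by (rule pless_PK[OF a(1,2)])
  have PK': "pless prec (Pw h m j) (Kw h kk)" by (rule pless_PK[OF a(1,2)])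
  have L3: "lexmax prec (splitn 1 (Ax i kk @ [3])) = [Kw h kk]"
    unfolding splitn1_Ax3[OF kk1 a(2)] using lexmax_last[of "[Pw h m i, Kw h kk]"] PK by simp
  have nn: "noninc (splitn 1 (Ax j kk'))" unfolding splitn1_Ax by (rule noninc2[OF prec_QP[OF a(3,4)]])
  have e1: "prec (Ax j kk') (Ax i kk @ [3]) = lexle prec (splitn 1 (Ax j kk')) [Kw h kk]"
    using prec_level[OF ge(1)] L3 lexle_eqv_left[OF lexmax_noninc[OF nn]] by simp
  have e2: "prec (Ax i kk @ [3]) (Ax j kk') = lexle prec [Kw h kk] (splitn 1 (Ax j kk'))"
    using prec_level[OF ge(2)] L3 lexle_eqv_right[OF lexmax_noninc[OF nn]] by simp
  have "prec (Ax j kk') (Ax i kk @ [3])" using e1 PK' by (simp add: splitn1_Ax splitn1_Ax')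
  moreover have "\<not> prec (Ax i kk @ [3]) (Ax j kk')" using e2 PK' by (simp add: splitn1_Ax splitn1_Ax' pless_def pequiv_def)
  ultimately show ?thesis by (rule pless_def2)
qed

lemma wequiv_K_Ax3: "m \<le> kk \<Longrightarrow> kk \<le> h \<Longrightarrow> wequiv (Kw h kk) (Ax i kk @ [3])"
proof -
  assume a: "m \<le> kk" "kk \<le> h"
  have kk1: "1 \<le> kk" using a m1 by simp
  have ge: "\<forall>y\<in>set (Kw h kk @ (Ax i kk @ [3])). 1 \<le> y" "\<forall>y\<in>set ((Ax i kk @ [3]) @ Kw h kk). 1 \<le> y"
    using set_Kw[of h kk] set_Ax[of i kk] by auto
  have PK: "pless prec (Pw h m i) (Kw h kk)" by (rule pless_PK[OF a])
  have L3: "lexmax prec (splitn 1 (Ax i kk @ [3])) = [Kw h kk]"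
    unfolding splitn1_Ax3[OF kk1 a(2)] using lexmax_last[of "[Pw h m i, Kw h kk]"] PK by simp
  have "1 \<notin> set (Kw h kk)" using set_Kw[of h kk] by auto
  then have LK: "lexmax prec (splitn 1 (Kw h kk)) = [Kw h kk]"
    by (simp add: splitn_no lexmax_single prec_refl)
  have "prec (Kw h kk) (Ax i kk @ [3])" using prec_level[OF ge(1)] L3 LK by (simp add: prec_refl pequiv_def)
  moreover have "prec (Ax i kk @ [3]) (Kw h kk)" using prec_level[OF ge(2)] L3 LK by (simp add: prec_refl pequiv_def)
  ultimately show ?thesis by (simp add: wequiv_def)
qed

end


declare upt_Suc[simp del]

definition Aword :: "nat \<Rightarrow> nat \<Rightarrow> (nat \<Rightarrow> nat) \<Rightarrow> nat \<Rightarrow> nat list" where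
  "Aword h m k r = joinw 0 (map (\<lambda>i. Ax h m i (k i)) (rev [1..<Suc r]))"

context
  fixes h m r :: nat and k :: "nat \<Rightarrow> nat"
  assumes m1: "1 \<le> m" and mh: "m \<le> h" and r1: "1 \<le> r"
    and kr: "\<forall>i\<in>{1..r}. m \<le> k i \<and> k i \<le> h"
begin

lemma set_Ax0: "set (Ax h m j kk) \<subseteq> {1,2,3}"
  by (rule set_Ax[OF m1 mh])


lemma splitn0_Aword: "1 \<le> r \<Longrightarrow> splitn 0 (Aword h m k r) = map (\<lambda>i. Ax h m i (k i)) (rev [1..<Suc r])"
  unfolding Aword_def
proof (rule splitn_joinw)
  assume "1 \<le> r"
  then show "map (\<lambda>i. Ax h m i (k i)) (rev [1..<Suc r]) \<noteq> []" by simp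
  show "\<forall>p\<in>set (map (\<lambda>i. Ax h m i (k i)) (rev [1..<Suc r])). 0 \<notin> set p"
    using set_Ax0 by fastforce
qed

lemma ps_nth: "i < r \<Longrightarrow> map (\<lambda>i. Ax h m i (k i)) (rev [1..<Suc r]) ! i = Ax h m (r - i) (k (r - i))"
proof -
  assume i: "i < r"
  have "rev [1..<Suc r] ! i = [1..<Suc r] ! (length [1..<Suc r] - Suc i)" using i by (intro rev_nth) simp
  also have "length [1..<Suc r] - Suc i = r - Suc i" by simp
  also have "[1..<Suc r] ! (r - Suc i) = 1 + (r - Suc i)" using i by (intro nth_upt) simp
  also have "1 + (r - Suc i) = r - i" using i by simp
  finally have "rev [1..<Suc r] ! i = r - i" .
  moreover have "i < length (rev [1..<Suc r])" using i by simp
  ultimately show ?thesis by (simp only: nth_map)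
qed

lemma set_Aword: "set (Aword h m k r) \<subseteq> {0,1,2,3}"
proof -
  have "set (Aword h m k r) \<subseteq> \<Union>(set ` set (map (\<lambda>i. Ax h m i (k i)) (rev [1..<Suc r]))) \<union> {0}"
    unfolding Aword_def by (rule set_joinw)
  moreover have "\<Union>(set ` set (map (\<lambda>i. Ax h m i (k i)) (rev [1..<Suc r]))) \<subseteq> {1,2,3}"
    using set_Ax0 by fastforce
  ultimately show ?thesis by auto
qed

lemma Aword_NF: "Aword h m k r \<in> NF"
proof (cases "r = 1")
  case True
  have "Aword h m k r = Ax h m 1 (k 1)" using True by (simp add: Aword_def upt_Suc)
  then show ?thesis using Ax_NF[OF m1 mh] kr True by simp
next
  case False
  then have r2: "2 \<le> r" using r1 by simp
  define A where "A = Aword h m k r"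
  define ps where "ps = map (\<lambda>i. Ax h m i (k i)) (rev [1..<Suc r])"
  have sp: "splitn 0 A = ps" unfolding A_def ps_def by (rule splitn0_Aword[OF r1])
  have lps: "length ps = r" unfolding ps_def by simp
  have z: "0 \<in> set A"
  proof (rule ccontr)
    assume "0 \<notin> set A"
    then have "splitn 0 A = [A]" by (rule splitn_no)
    then show False using sp lps r2 by simp
  qed
  then have ne: "A \<noteq> []" by auto
  have mn: "Min (set A) = 0" using z by (intro Min_eqI) auto
  show ?thesis unfolding A_def[symmetric]
  proof (rule NF_step[OF ne])
    show "\<forall>i. Suc i < length (splitn (Min (set A)) A) \<longrightarrow>
      prec (splitn (Min (set A)) A ! Suc i) (splitn (Min (set A)) A ! i)"
    proof (intro allI impI)
      fix i assume "Suc i < length (splitn (Min (set A)) A)"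
      then have i: "Suc i < r" using mn sp lps by simp
      have e1: "ps ! Suc i = Ax h m (r - Suc i) (k (r - Suc i))" unfolding ps_def by (rule ps_nth[OF i])
      have e2: "ps ! i = Ax h m (r - i) (k (r - i))" unfolding ps_def using i by (intro ps_nth) simp
      have eq: "Suc (r - Suc i) = r - i" using i by simp
      have a1: "r - Suc i \<in> {1..r}" "r - i \<in> {1..r}" using i by auto
      have "prec (Ax h m (r - Suc i) (k (r - Suc i))) (Ax h m (Suc (r - Suc i)) (k (r - i)))"
        using a1 kr by (intro prec_Ax_Suc[OF m1 mh]) auto
      then have "prec (Ax h m (r - Suc i) (k (r - Suc i))) (Ax h m (r - i) (k (r - i)))"
        unfolding eq .
      then show "prec (splitn (Min (set A)) A ! Suc i) (splitn (Min (set A)) A ! i)"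
        using e1 e2 mn sp by simp
    qed
    show "\<forall>p\<in>set (splitn (Min (set A)) A). p \<in> NF"
      unfolding mn sp ps_def using Ax_NF[OF m1 mh] kr by auto
  qed
qed

lemma diamond_K:
  assumes i: "1 \<le> i" "i \<le> r"
  shows "diamond 3 (joinw 0 (take (r - i + 1) (map (\<lambda>i. Ax h m i (k i)) (rev [1..<Suc r])))) = Kw h (k i)"
proof -
  define f where "f = (\<lambda>i. Ax h m i (k i))"
  define xs where "xs = map f (rev [Suc i..<Suc r])"
  have ki: "m \<le> k i" "k i \<le> h" using kr i by auto
  have k1: "1 \<le> k i" using ki m1 by simp
  have u1: "[1..<Suc r] = [1..<i] @ [i..<Suc r]" using i by (intro upt_split3) auto
  have u2: "[i..<Suc r] = i # [Suc i..<Suc r]" using i by (intro upt_conv_Cons) simp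
  have tl: "take (length L) (L @ M) = L" for L M :: "nat list" by simp
  have "rev [1..<Suc r] = rev [i..<Suc r] @ rev [1..<i]" by (simp only: u1 rev_append)
  moreover have "length (rev [i..<Suc r]) = r - i + 1" using i by simp
  ultimately have "take (r - i + 1) (rev [1..<Suc r]) = rev [i..<Suc r]" using tl by metis
  then have tk: "take (r - i + 1) (map f (rev [1..<Suc r])) = xs @ [f i]"
    unfolding xs_def by (simp add: take_map u2)
  define Y where "Y = joinw 0 (xs @ [f i @ [3]])"
  have Yeq: "joinw 0 (xs @ [f i]) @ [3] = Y" unfolding Y_def by (rule joinw_snoc_app)
  have sx: "\<forall>p\<in>set xs. set p \<subseteq> {1,2,3}" unfolding xs_def f_def using set_Ax0 by auto
  have sfi: "set (f i @ [3]) \<subseteq> {1,2,3}" unfolding f_def using set_Ax0 by auto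
  have no0: "\<forall>p\<in>set (xs @ [f i @ [3]]). 0 \<notin> set p"
  proof
    fix p assume "p \<in> set (xs @ [f i @ [3]])"
    then have "set p \<subseteq> {1,2,3}" using sx sfi by auto
    then show "0 \<notin> set p" by auto
  qed
  have spY: "splitn 0 Y = xs @ [f i @ [3]]" unfolding Y_def by (rule splitn_joinw) (use no0 in auto)
  have lt: "\<forall>x\<in>set (butlast (xs @ [f i @ [3]])). pless prec x (last (xs @ [f i @ [3]]))"
  proof
    fix x assume "x \<in> set (butlast (xs @ [f i @ [3]]))"
    then have "x \<in> f ` set (rev [Suc i..<Suc r])" unfolding xs_def by simp
    then obtain j where j0: "j \<in> set [Suc i..<Suc r]" "x = f j" by auto
    then have j: "j \<in> {Suc i..r}" "x = f j" by auto
    have kj: "m \<le> k j" "k j \<le> h" using kr j(1) i by auto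
    show "pless prec x (last (xs @ [f i @ [3]]))"
      unfolding j(2) f_def using pless_Ax3[OF m1 mh ki kj] by simp
  qed
  have LY: "lexmax prec (splitn 0 Y) = [f i @ [3]]"
    unfolding spY using lexmax_last[of "xs @ [f i @ [3]]"] lt by simp
  have "0 \<notin> set (Kw h (k i))" using set_Kw[of h "k i"] by auto
  then have LK: "lexmax prec (splitn 0 (Kw h (k i))) = [Kw h (k i)]"
    by (simp add: splitn_no lexmax_single prec_refl)
  have w: "wequiv (Kw h (k i)) (f i @ [3])" unfolding f_def by (rule wequiv_K_Ax3[OF m1 mh ki])
  have p1: "prec (Kw h (k i)) Y = prec (Kw h (k i)) (f i @ [3])"
    using prec_level[of "Kw h (k i)" Y 0] LY LK by (auto simp: pless_def pequiv_def)
  have p2: "prec Y (Kw h (k i)) = prec (f i @ [3]) (Kw h (k i))"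
    using prec_level[of Y "Kw h (k i)" 0] LY LK by (auto simp: pless_def pequiv_def)
  have wKY: "wequiv (Kw h (k i)) Y" using w p1 p2 by (simp add: wequiv_def)
  have KNF: "Kw h (k i) \<in> NF"
    unfolding Kw_eq[symmetric] by (rule Ww_NF[OF esK_ne esK_sorted])
  have "diamond 3 (joinw 0 (xs @ [f i])) = Kw h (k i)"
    unfolding diamond_def Yeq
  proof (rule the_equality)
    show "Kw h (k i) \<in> NF \<and> wequiv (Kw h (k i)) Y" using KNF wKY by simp
    fix B assume B: "B \<in> NF \<and> wequiv B Y"
    then have BY: "wequiv B Y" by simp
    have "wequiv B (Kw h (k i))" by (rule wequiv_trans[OF BY wequiv_sym[OF wKY]])
    moreover have "B \<in> NF" using B by simp
    ultimately show "B = Kw h (k i)" using NF_unique KNF by blast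
  qed
  then show ?thesis using tk f_def by simp
qed

end

theorem lemma7:
  fixes h r :: nat and k :: "nat \<Rightarrow> nat"
  assumes "h \<ge> 1" and "r \<ge> 1"
    and "\<forall>i \<in> {1..r}. 1 \<le> k i \<and> k i \<le> h"
  shows "\<exists>A \<in> W3N. uvec A = map (\<lambda>i. Kw h (k i)) [1..<r+1]"
proof -
  define m where "m = Min (k ` {1..r})"
  have fin: "finite (k ` {1..r})" by simp
  have nem: "k ` {1..r} \<noteq> {}" using assms(2) by auto
  have "m \<in> k ` {1..r}" unfolding m_def by (rule Min_in[OF fin nem])
  then have m1: "1 \<le> m" and mh: "m \<le> h" using assms(3) by auto
  have kr: "\<forall>i\<in>{1..r}. m \<le> k i \<and> k i \<le> h" using assms(3) unfolding m_def using fin by auto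
  define A where "A = Aword h m k r"
  have "A \<in> W3N"
    unfolding W3N_def W3_def A_def using Aword_NF[OF m1 mh assms(2) kr] set_Aword[OF m1 mh assms(2) kr] by auto
  moreover have "uvec A = map (\<lambda>i. Kw h (k i)) [1..<r+1]"
  proof -
    have sp: "splitn 0 A = map (\<lambda>i. Ax h m i (k i)) (rev [1..<Suc r])"
      unfolding A_def by (rule splitn0_Aword[OF m1 mh assms(2) kr assms(2)])
    have l: "length (map (\<lambda>i. Ax h m i (k i)) (rev [1..<Suc r])) = r" by simp
    show ?thesis unfolding uvec_def Let_def sp l
    proof (rule map_cong[OF refl])
      fix i assume "i \<in> set [1..<r+1]"
      then have i: "1 \<le> i" "i \<le> r" by auto
      show "diamond 3 (joinw 0 (take (r - i + 1) (map (\<lambda>i. Ax h m i (k i)) (rev [1..<Suc r])))) = Kw h (k i)"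
        by (rule diamond_K[OF m1 mh assms(2) kr i])
    qed
  qed
  ultimately show ?thesis by blast
qed



end
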